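(* Let $\mathcal L:\mathbb R^n\to(-\infty,\infty]$ be proper and lower semicontinuous. (i) Let $B\in\mathbb R^{r\times n}$, $b\in\mathbb R^r$, $\lambda\in\mathbb R^r$ with $\lambda>0$ componentwise, and $\Phi_\lambda\in\{\Phi_{0,\lambda},\Phi_{+,\lambda}\}$. If $\mathcal L$ is ALS, then $H(x):=\mathcal L(x)+\Phi_\lambda(Bx-b)$ is ALS. (ii) Suppose in addition that $\mathcal L$ is convex and ALS, that $C\subseteq\mathbb R^n$ is a polyhedral convex set, and that $\operatorname{dom}\mathcal L\cap C\neq\emptyset$. Then $U(x):=\mathcal L(x)+\delta(x\mid C)$ is ALS.
   Context: For $u\in\mathbb R^r$ and $\lambda\in\mathbb R^r$, $\lambda>0$: $\Phi_{0,\lambda}(u)=\sum_{i=1}^r\lambda_i\mathbf 1_{\{u_i\neq0\}}$ and $\Phi_{+,\lambda}(u)=\sum_{i=1}^r\lambda_i\mathbf 1_{\{u_i>0\}}$. $\delta(x\mid C)$ is $0$ if $x\in C$ and $+\infty$ otherwise. For a proper lsc $\psi:\mathbb R^n\to(-\infty,\infty]$, its asymptotic function is $\psi_\infty(d)=\liminf_{\tilde d\to d,\ t\to+\infty}\psi(t\tilde d)/t$ and $\operatorname{Ker}\psi_\infty=\{d:\psi_\infty(d)=0\}$; $\operatorname{lev}(\psi,\tau)=\{x:\psi(x)\le\tau\}$. $\psi$ is called asymptotically level stable (ALS) if for each $\rho>0$, each bounded sequence of reals $\{\tau_k\}$ and each sequence $\{x^k\}$ with $x^k\in\operatorname{lev}(\psi,\tau_k)$,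 $\|x^k\|\to\infty$, $x^k/\|x^k\|\to\bar x\in\operatorname{Ker}\psi_\infty$, there is $k_0$ with $x^k-\rho\bar x\in\operatorname{lev}(\psi,\tau_k)$ for all $k\ge k_0$. *)

theory Defs
  imports "HOL-Analysis.Analysis"
begin

text \<open>Extended-real-valued functions on R^n are modelled as functions into ereal.\<close>

definition proper_fun :: "('a \<Rightarrow> ereal) \<Rightarrow> bool" where
  "proper_fun f \<longleftrightarrow> (\<forall>x. f x \<noteq> -\<infinity>) \<and> (\<exists>x. f x \<noteq> \<infinity>)"

definition lsc_fun :: "('a::topological_space \<Rightarrow> ereal) \<Rightarrow> bool" where
  "lsc_fun f \<longleftrightarrow> (\<forall>x. f x \<le> Liminf (at x) f)"

definition dom_fun :: "('a \<Rightarrow> ereal) \<Rightarrow> 'a set" where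
  "dom_fun f = {x. f x < \<infinity>}"

definition convex_fun :: "('a::real_vector \<Rightarrow> ereal) \<Rightarrow> bool" where
  "convex_fun f \<longleftrightarrow> convex {(x, \<mu>::real). f x \<le> ereal \<mu>}"

definition Phi0 :: "real^'r \<Rightarrow> real^'r \<Rightarrow> real" where
  "Phi0 lam u = (\<Sum>i\<in>UNIV. lam $ i * (if u $ i \<noteq> 0 then 1 else 0))"

definition Phiplus :: "real^'r \<Rightarrow> real^'r \<Rightarrow> real" where
  "Phiplus lam u = (\<Sum>i\<in>UNIV. lam $ i * (if u $ i > 0 then 1 else 0))"

definition indicator_fun :: "'a set \<Rightarrow> 'a \<Rightarrow> ereal" where
  "indicator_fun C x = (if x \<in> C then 0 else \<infinity>)"

definition asymp_fun :: "('a::real_normed_vector \<Rightarrow> ereal) \<Rightarrow> 'a \<Rightarrow> ereal" where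
  "asymp_fun psi d = Liminf (nhds d \<times>\<^sub>F at_top) (\<lambda>(d', t::real). psi (t *\<^sub>R d') / ereal t)"

definition Ker_asymp :: "('a::real_normed_vector \<Rightarrow> ereal) \<Rightarrow> 'a set" where
  "Ker_asymp psi = {d. asymp_fun psi d = 0}"

definition lev :: "('a \<Rightarrow> ereal) \<Rightarrow> real \<Rightarrow> 'a set" where
  "lev psi \<tau> = {x. psi x \<le> ereal \<tau>}"

definition ALS :: "('a::real_normed_vector \<Rightarrow> ereal) \<Rightarrow> bool" where
  "ALS psi \<longleftrightarrow>
    (\<forall>\<rho>::real. \<forall>\<tau>::nat \<Rightarrow> real. \<forall>x::nat \<Rightarrow> 'a. \<forall>xbar.
       \<rho> > 0 \<and> bounded (range \<tau>) \<and> (\<forall>k. x k \<in> lev psi (\<tau> k))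
       \<and> filterlim (\<lambda>k. norm (x k)) at_top sequentially
       \<and> (\<lambda>k. x k /\<^sub>R norm (x k)) \<longlonglongrightarrow> xbar
       \<and> xbar \<in> Ker_asymp psi
       \<longrightarrow> (\<exists>k0. \<forall>k\<ge>k0. x k - \<rho> *\<^sub>R xbar \<in> lev psi (\<tau> k)))"

end

theory Submission
  imports Defs
begin


lemma sign_lemma_bot:
  fixes u N :: "nat \<Rightarrow> real"
  assumes N: "filterlim N at_top sequentially" and lim: "(\<lambda>k. u k / N k) \<longlonglongrightarrow> v" and v: "v < 0"
  shows "filterlim u at_bot sequentially"
proof -
  have h1: "filterlim (\<lambda>k. u k / N k * N k) at_bot sequentially"
    by (rule filterlim_tendsto_neg_mult_at_bot[OF lim v N])
  moreover have h2: "eventually (\<lambda>k. u k / N k * N k = u k) sequentially"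
  proof -
    have "eventually (\<lambda>k. 0 < N k) sequentially" using filterlim_at_top_dense[THEN iffD1, OF N, rule_format, of 0] by simp
    then show ?thesis by (rule eventually_mono) simp
  qed
  have eqf: "filterlim (\<lambda>k. u k / N k * N k) F sequentially = filterlim u F sequentially" for F
    by (rule filterlim_cong[OF refl refl h2])
  show ?thesis using eqf h1 by (rule iffD1)
qed

lemma sign_lemma_top:
  fixes u N :: "nat \<Rightarrow> real"
  assumes N: "filterlim N at_top sequentially" and lim: "(\<lambda>k. u k / N k) \<longlonglongrightarrow> v" and v: "v > 0"
  shows "filterlim u at_top sequentially"
proof -
  have h1: "filterlim (\<lambda>k. u k / N k * N k) at_top sequentially"
    by (rule filterlim_tendsto_pos_mult_at_top[OF lim v N])
  moreover have h2: "eventually (\<lambda>k. u k / N k * N k = u k) sequentially"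
  proof -
    have "eventually (\<lambda>k. 0 < N k) sequentially" using filterlim_at_top_dense[THEN iffD1, OF N, rule_format, of 0] by simp
    then show ?thesis by (rule eventually_mono) simp
  qed
  have eqf: "filterlim (\<lambda>k. u k / N k * N k) F sequentially = filterlim u F sequentially" for F
    by (rule filterlim_cong[OF refl refl h2])
  show ?thesis using eqf h1 by (rule iffD1)
qed

lemma ev_tpos: "eventually (\<lambda>p::('a::real_normed_vector \<times> real). snd p > 0) (nhds d \<times>\<^sub>F at_top)"
  using eventually_prodI[OF always_eventually[of "\<lambda>_. True"] eventually_gt_at_top[of 0]] by simp

lemma prod_nbot: "(nhds (d::'a::real_normed_vector) \<times>\<^sub>F (at_top::real filter)) \<noteq> bot"
  by (simp add: prod_filter_eq_bot)

lemma asymp_mono: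
  assumes "\<And>x. f x \<le> g x"
  shows "asymp_fun f d \<le> asymp_fun g d"
  unfolding asymp_fun_def
  by (rule Liminf_mono, rule eventually_mono[OF ev_tpos]) (auto simp: assms)

lemma ereal_add_div: "t > 0 \<Longrightarrow> (a + ereal p) / ereal t = a / ereal t + ereal (p / t)"
  by (cases a) (auto simp: add_divide_distrib)

lemma asymp_perturb:
  assumes "\<And>x. g x \<le> f x + ereal M" and M: "M \<ge> 0"
  shows "asymp_fun g d \<le> asymp_fun f d"
  unfolding asymp_fun_def
proof (rule ereal_le_epsilon2)
  fix e :: real assume e: "e > 0"
  let ?F = "nhds d \<times>\<^sub>F at_top"
  have ev: "eventually (\<lambda>p::('a \<times> real). snd p > M / e + 1) ?F"
    using eventually_prodI[OF always_eventually[of "\<lambda>_. True"] eventually_gt_at_top[of "M/e+1"]] by simp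
  have "Liminf ?F (\<lambda>(d', t). g (t *\<^sub>R d') / ereal t) \<le> Liminf ?F (\<lambda>p. (\<lambda>(d', t). f (t *\<^sub>R d') / ereal t) p + ereal e)"
  proof -
   have key: "g (t *\<^sub>R d') / ereal t \<le> f (t *\<^sub>R d') / ereal t + ereal e" if t: "M / e + 1 < t" for d' and t :: real
   proof -
    have "M / e \<ge> 0" using M e by simp
    then have tp: "t > 0" using t by linarith
    have "M < t * e" using t e pos_divide_less_eq[of e M t] by linarith
    then have "M / t \<le> e" using tp pos_divide_le_eq[of t M e] by (simp add: mult.commute)
    have "g (t *\<^sub>R d') / ereal t \<le> (f (t *\<^sub>R d') + ereal M) / ereal t"
      using assms(1) tp by simp
    also have "\<dots> = f (t *\<^sub>R d') / ereal t + ereal (M / t)" using ereal_add_div tp by blast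
    also have "\<dots> \<le> f (t *\<^sub>R d') / ereal t + ereal e" using \<open>M / t \<le> e\<close> by (intro add_left_mono) simp
    finally show "g (t *\<^sub>R d') / ereal t \<le> f (t *\<^sub>R d') / ereal t + ereal e" .
   qed
   show ?thesis by (rule Liminf_mono, rule eventually_mono[OF ev]) (auto simp: key)
  qed
  also have "\<dots> = Liminf ?F (\<lambda>(d', t). f (t *\<^sub>R d') / ereal t) + ereal e"
    by (rule Liminf_add_ereal_right[OF prod_nbot]) simp
  finally show "Liminf ?F (\<lambda>(d', t). g (t *\<^sub>R d') / ereal t) \<le> Liminf ?F (\<lambda>(d', t). f (t *\<^sub>R d') / ereal t) + ereal e" .
qed



lemma ev_lt_bot:
  fixes u N :: "nat \<Rightarrow> real"
  assumes "filterlim N at_top sequentially" "(\<lambda>k. u k / N k) \<longlonglongrightarrow> v" "v < 0"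
  shows "eventually (\<lambda>k. u k < c) sequentially"
  using filterlim_at_bot_dense[THEN iffD1, OF sign_lemma_bot[OF assms], rule_format, of c] .

lemma ev_gt_top:
  fixes u N :: "nat \<Rightarrow> real"
  assumes "filterlim N at_top sequentially" "(\<lambda>k. u k / N k) \<longlonglongrightarrow> v" "v > 0"
  shows "eventually (\<lambda>k. u k > c) sequentially"
  using filterlim_at_top_dense[THEN iffD1, OF sign_lemma_top[OF assms], rule_format, of c] .

lemma comp_lim:
  fixes x :: "nat \<Rightarrow> real^'n" and B :: "real^'n^'r"
  assumes N: "filterlim (\<lambda>k. norm (x k)) at_top sequentially"
    and lim: "(\<lambda>k. x k /\<^sub>R norm (x k)) \<longlonglongrightarrow> xbar"
  shows "(\<lambda>k. (B *v x k - b)$i / norm (x k)) \<longlonglongrightarrow> (B *v xbar)$i"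
proof -
  have 1: "(\<lambda>k. (B *v (x k /\<^sub>R norm (x k)))$i) \<longlonglongrightarrow> (B *v xbar)$i"
    by (intro tendsto_vec_nth isCont_tendsto_compose[OF matrix_vector_mult_linear_continuous_at lim])
  have 2: "(\<lambda>k. b$i / norm (x k)) \<longlonglongrightarrow> 0"
    by (rule tendsto_divide_0[OF tendsto_const filterlim_at_top_imp_at_infinity[OF N]])
  have "(\<lambda>k. (B *v (x k /\<^sub>R norm (x k)))$i - b$i / norm (x k)) \<longlonglongrightarrow> (B *v xbar)$i - 0"
    by (intro tendsto_diff 1 2)
  moreover have "(B *v (x k /\<^sub>R norm (x k)))$i - b$i / norm (x k) = (B *v x k - b)$i / norm (x k)" for k
    by (simp add: matrix_vector_mult_scaleR diff_divide_distrib divide_inverse_commute right_diff_distrib)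
  ultimately show ?thesis by simp
qed

lemma inner_lim:
  fixes x :: "nat \<Rightarrow> 'a::real_inner"
  assumes lim: "(\<lambda>k. x k /\<^sub>R norm (x k)) \<longlonglongrightarrow> xbar"
  shows "(\<lambda>k. (a \<bullet> x k) / norm (x k)) \<longlonglongrightarrow> a \<bullet> xbar"
proof -
  have "(\<lambda>k. a \<bullet> (x k /\<^sub>R norm (x k))) \<longlonglongrightarrow> a \<bullet> xbar"
    by (intro tendsto_inner tendsto_const lim)
  moreover have "a \<bullet> (x k /\<^sub>R norm (x k)) = (a \<bullet> x k) / norm (x k)" for k
    by (simp add: divide_inverse_commute)
  ultimately show ?thesis by simp
qed

lemma Phi_bounds:
  assumes "\<forall>i. lam $ i > 0" "Phi = Phi0 lam \<or> Phi = Phiplus lam"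
  shows "0 \<le> Phi u \<and> Phi u \<le> sum (\<lambda>i. lam $ i) UNIV"
  using assms unfolding Phi0_def Phiplus_def
  by (auto intro!: sum_nonneg sum_mono simp: less_imp_le)



lemma part1:
  fixes L :: "real^'n \<Rightarrow> ereal" and B :: "real^'n^'r" and b lam :: "real^'r" and Phi
  assumes lam: "\<forall>i. lam $ i > 0" and Ph: "Phi = Phi0 lam \<or> Phi = Phiplus lam" and als: "ALS L"
  shows "ALS (\<lambda>x. L x + ereal (Phi (B *v x - b)))" (is "ALS ?H")
proof -
  define M where "M = sum (\<lambda>i. lam $ i) UNIV"
  have Pb: "\<And>u. 0 \<le> Phi u \<and> Phi u \<le> M" using Phi_bounds[OF lam Ph] M_def by blast
  have M0: "M \<ge> 0" using Pb by (meson order.trans)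
  have asy: "asymp_fun ?H d = asymp_fun L d" for d
  proof (rule antisym)
    show "asymp_fun ?H d \<le> asymp_fun L d"
      by (rule asymp_perturb[OF _ M0]) (intro add_left_mono, simp add: Pb)
    have "L x + 0 \<le> L x + ereal (Phi (B *v x - b))" for x
      by (rule add_left_mono) (simp add: Pb)
    then show "asymp_fun L d \<le> asymp_fun ?H d"
      by (intro asymp_mono) simp
  qed
  show ?thesis
  unfolding ALS_def
  proof (intro allI impI, elim conjE)
    fix \<rho> :: real and \<tau> :: "nat \<Rightarrow> real" and x :: "nat \<Rightarrow> real^'n" and xbar
    assume \<rho>: "\<rho> > 0" and \<tau>b: "bounded (range \<tau>)" and lv: "\<forall>k. x k \<in> lev ?H (\<tau> k)"
      and N: "filterlim (\<lambda>k. norm (x k)) at_top sequentially"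
      and lim: "(\<lambda>k. x k /\<^sub>R norm (x k)) \<longlonglongrightarrow> xbar" and ker: "xbar \<in> Ker_asymp ?H"
    define \<tau>' where "\<tau>' k = \<tau> k - Phi (B *v x k - b)" for k
    have kerL: "xbar \<in> Ker_asymp L" using ker asy by (simp add: Ker_asymp_def)
    have bd: "bounded (range \<tau>')"
    proof -
      obtain a where a: "\<forall>y\<in>range \<tau>. \<bar>y\<bar> \<le> a" using \<tau>b bounded_real by blast
      have "\<forall>y\<in>range \<tau>'. \<bar>y\<bar> \<le> a + M"
      proof
        fix y assume "y \<in> range \<tau>'"
        then obtain k where k: "y = \<tau>' k" by blast
        have "\<bar>\<tau> k\<bar> \<le> a" using a by blast
        then show "\<bar>y\<bar> \<le> a + M" using Pb[of "B *v x k - b"] unfolding k \<tau>'_def by arith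
      qed
      then show ?thesis using bounded_real by blast
    qed
    have lvL: "\<forall>k. x k \<in> lev L (\<tau>' k)"
    proof
      fix k
      have "L (x k) + ereal (Phi (B *v x k - b)) \<le> ereal (\<tau> k)" using lv by (simp add: lev_def)
      then show "x k \<in> lev L (\<tau>' k)" unfolding lev_def \<tau>'_def by (cases "L (x k)") auto
    qed
    obtain k0 where k0: "\<forall>k\<ge>k0. x k - \<rho> *\<^sub>R xbar \<in> lev L (\<tau>' k)"
      using als[unfolded ALS_def, rule_format, of \<rho> \<tau>' x xbar] \<rho> bd lvL N lim kerL by blast
    have comp: "eventually (\<lambda>k. (if (B *v (x k - \<rho> *\<^sub>R xbar) - b)$i \<noteq> 0 then 1 else 0) \<le> (if (B *v x k - b)$i \<noteq> 0 then 1 else (0::real))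
        \<and> (if (B *v (x k - \<rho> *\<^sub>R xbar) - b)$i > 0 then 1 else 0) \<le> (if (B *v x k - b)$i > 0 then 1 else (0::real))) sequentially" for i
    proof -
      define v where "v = (B *v xbar)$i"
      define u where "u = (\<lambda>k. (B *v x k - b)$i)"
      have ul: "(\<lambda>k. u k / norm (x k)) \<longlonglongrightarrow> v" unfolding u_def v_def by (rule comp_lim[OF N lim])
      have eq: "(B *v (x k - \<rho> *\<^sub>R xbar) - b)$i = u k - \<rho> * v" for k
        by (simp add: u_def v_def matrix_vector_mult_diff_distrib matrix_vector_mult_scaleR)
      have eq2: "(B *v x k - b)$i = u k" for k by (simp add: u_def)
      have "eventually (\<lambda>k. (if u k - \<rho> * v \<noteq> 0 then 1 else 0) \<le> (if u k \<noteq> 0 then 1 else (0::real))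
        \<and> (if u k - \<rho> * v > 0 then 1 else 0) \<le> (if u k > 0 then 1 else (0::real))) sequentially"
      proof -
        consider "v > 0" | "v < 0" | "v = 0" by linarith
        then show ?thesis
        proof cases
          case 1
          show ?thesis using ev_gt_top[OF N ul 1, of 0] by (rule eventually_mono) auto
        next
          case 2
          have rv: "\<rho> * v < 0" using \<rho> 2 by (simp add: mult_pos_neg)
          show ?thesis using ev_lt_bot[OF N ul 2, of "\<rho> * v"] by (rule eventually_mono) (use rv in auto)
        next
          case 3 then show ?thesis by simp
        qed
      qed
      then show ?thesis unfolding eq eq2 .
    qed
    have evPhi: "eventually (\<lambda>k. Phi (B *v (x k - \<rho> *\<^sub>R xbar) - b) \<le> Phi (B *v x k - b)) sequentially"
      using eventually_all_finite[OF comp]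
      apply (rule eventually_mono)
      using Ph lam unfolding Phi0_def Phiplus_def by (auto intro!: sum_mono mult_left_mono simp: less_imp_le)
    obtain k1 where k1: "\<forall>k\<ge>k1. Phi (B *v (x k - \<rho> *\<^sub>R xbar) - b) \<le> Phi (B *v x k - b)"
      using evPhi eventually_sequentially by meson
    show "\<exists>k0. \<forall>k\<ge>k0. x k - \<rho> *\<^sub>R xbar \<in> lev ?H (\<tau> k)"
    proof (intro exI allI impI)
      fix k assume "max k0 k1 \<le> k"
      then have "L (x k - \<rho> *\<^sub>R xbar) \<le> ereal (\<tau>' k)" "Phi (B *v (x k - \<rho> *\<^sub>R xbar) - b) \<le> Phi (B *v x k - b)"
        using k0 k1 by (auto simp: lev_def)
      then show "x k - \<rho> *\<^sub>R xbar \<in> lev ?H (\<tau> k)"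
        unfolding lev_def \<tau>'_def by (cases "L (x k - \<rho> *\<^sub>R xbar)") auto
    qed
  qed
qed



lemma conv_lsc_ray:
  fixes L :: "'a::real_normed_vector \<Rightarrow> ereal"
  assumes prp: "proper_fun L" and lsc: "lsc_fun L" and cv: "convex_fun L"
    and l0: "L x0 = ereal l0" and asy: "asymp_fun L d < ereal (-e)" and e: "e > 0" and s: "s > 0"
  shows "L (x0 + s *\<^sub>R d) \<le> ereal (l0 - s*e/2)"
proof (rule ccontr)
  define c where "c = l0 - s*e/2"
  define y0 where "y0 = x0 + s *\<^sub>R d"
  assume "\<not> L (x0 + s *\<^sub>R d) \<le> ereal (l0 - s*e/2)"
  then have cy: "ereal c < L y0" unfolding c_def y0_def by simp
  then have "ereal c < Liminf (at y0) L" using lsc unfolding lsc_fun_def by (meson less_le_trans)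
  then have "eventually (\<lambda>y. L y > ereal c) (at y0)" by (rule less_LiminfD)
  then obtain r where r: "r > 0" and rr: "\<forall>y. y \<noteq> y0 \<and> dist y y0 < r \<longrightarrow> L y > ereal c"
    unfolding eventually_at by auto
  have rball: "L y > ereal c" if "dist y y0 < r" for y
    using rr cy that by (cases "y = y0") auto
  let ?F = "nhds d \<times>\<^sub>F (at_top :: real filter)"
  let ?f = "\<lambda>(d', t::real). L (t *\<^sub>R d') / ereal t"
  have nev: "\<not> eventually (\<lambda>p. ereal (-e) \<le> ?f p) ?F"
  proof
    assume "eventually (\<lambda>p. ereal (-e) \<le> ?f p) ?F"
    then have "ereal (-e) \<le> asymp_fun L d" unfolding asymp_fun_def by (rule Liminf_bounded)
    then show False using asy by simp
  qed
  define T where "T = 1 + s + 2*\<bar>l0\<bar>/e + 2 * s * norm x0 / r"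
  have rs: "r/(2* s) > 0" using r s by simp
  have "eventually (\<lambda>d'. dist d' d < r/(2* s)) (nhds d)"
    using rs unfolding eventually_nhds_metric by blast
  then have evP: "eventually (\<lambda>p. dist (fst p) d < r/(2* s) \<and> snd p > T) ?F"
    by (rule eventually_prodI[OF _ eventually_gt_at_top])
  obtain d' t where P: "dist d' d < r/(2* s)" "t > T" and fl: "\<not> ereal (-e) \<le> L (t *\<^sub>R d') / ereal t"
  proof -
    have "\<not> (\<forall>p. (dist (fst p) d < r/(2* s) \<and> snd p > T) \<longrightarrow> ereal (-e) \<le> ?f p)"
    proof
      assume h: "\<forall>p. (dist (fst p) d < r/(2* s) \<and> snd p > T) \<longrightarrow> ereal (-e) \<le> ?f p"
      have "eventually (\<lambda>p. ereal (-e) \<le> ?f p) ?F" using evP by (rule eventually_mono) (use h in blast)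
      then show False using nev by blast
    qed
    then show ?thesis using that by auto
  qed
  have T1: "2*\<bar>l0\<bar>/e \<ge> 0" "2 * s * norm x0 / r \<ge> 0" using e r s by auto
  have tp: "t > 0" "t > s" using P T1 s unfolding T_def by linarith+
  have t1: "2*\<bar>l0\<bar>/e < t" "2 * s * norm x0 / r < t" using P T1 s unfolding T_def by linarith+
  obtain m where m: "L (t *\<^sub>R d') = ereal m"
    using fl prp tp unfolding proper_fun_def by (cases "L (t *\<^sub>R d')") auto
  have "m / t < -e" using fl m tp by simp
  then have mt: "m < -e * t" using tp by (simp add: pos_divide_less_eq)
  define u where "u = s / t"
  have u01: "0 \<le> u" "u \<le> 1" using tp s unfolding u_def by auto
  have "((1 - u) *\<^sub>R (x0, l0) + u *\<^sub>R (t *\<^sub>R d', m)) \<in> {(x, \<mu>::real). L x \<le> ereal \<mu>}"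
    using cv[unfolded convex_fun_def] l0 m u01
    by (intro convexD) auto
  then have Ly: "L ((1 - u) *\<^sub>R x0 + u *\<^sub>R (t *\<^sub>R d')) \<le> ereal ((1 - u) * l0 + u * m)"
    by simp
  have yeq: "(1 - u) *\<^sub>R x0 + u *\<^sub>R (t *\<^sub>R d') = y0 + (s *\<^sub>R (d' - d) - (s/t) *\<^sub>R x0)"
    using tp unfolding u_def y0_def by (simp add: algebra_simps)
  have n1: "norm (s *\<^sub>R (d' - d)) < r/2"
  proof -
    have "norm (s *\<^sub>R (d' - d)) = s * dist d' d" using s by (simp add: dist_norm)
    also have "\<dots> < s * (r/(2* s))" using P(1) s by (intro mult_strict_left_mono) auto
    also have "\<dots> = r/2" using s by simp
    finally show ?thesis .
  qed
  have n2: "norm ((s/t) *\<^sub>R x0) < r/2"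
  proof -
    have "2 * s * norm x0 < t * r" using t1(2) r by (simp add: pos_divide_less_eq)
    then have "s * norm x0 / t < r/2" using tp by (simp add: pos_divide_less_eq algebra_simps)
    then show ?thesis using s tp by simp
  qed
  have "dist ((1 - u) *\<^sub>R x0 + u *\<^sub>R (t *\<^sub>R d')) y0 < r"
  proof -
    have "dist ((1 - u) *\<^sub>R x0 + u *\<^sub>R (t *\<^sub>R d')) y0 = norm (s *\<^sub>R (d' - d) - (s/t) *\<^sub>R x0)"
      unfolding yeq by (simp add: dist_norm)
    also have "\<dots> \<le> norm (s *\<^sub>R (d' - d)) + norm ((s/t) *\<^sub>R x0)" by (rule norm_triangle_ineq4)
    finally show ?thesis using n1 n2 by linarith
  qed
  then have Lgt: "L ((1 - u) *\<^sub>R x0 + u *\<^sub>R (t *\<^sub>R d')) > ereal c" by (rule rball)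
  have a2: "\<bar>l0\<bar> / t < e/2"
  proof -
    have "2*\<bar>l0\<bar> < t * e" using t1(1) e by (simp add: pos_divide_less_eq)
    then show ?thesis using tp by (simp add: pos_divide_less_eq algebra_simps)
  qed
  have ue: "u * \<bar>l0\<bar> = s * (\<bar>l0\<bar> / t)" unfolding u_def by simp
  have "s * (\<bar>l0\<bar> / t) \<le> s * (e / 2)" using a2 s by (intro mult_left_mono) auto
  then have "u * \<bar>l0\<bar> \<le> s * e / 2" unfolding ue by simp
  moreover have "u * m < - s * e"
  proof -
    have "s * m < s * (-e * t)" by (rule mult_strict_left_mono[OF mt s])
    then have "s * m / t < s * (-e * t) / t" using tp(1) by (rule divide_strict_right_mono)
    also have "\<dots> = - s * e" using tp by simp
    finally show ?thesis unfolding u_def by simp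
  qed
  moreover have "- (u * l0) \<le> u * \<bar>l0\<bar>" using u01 by (metis abs_ge_minus_self mult_left_mono mult_minus_right)
  ultimately have "(1 - u) * l0 + u * m < c" unfolding c_def by (simp add: algebra_simps)
  then have "ereal ((1 - u) * l0 + u * m) < ereal c" by simp
  with Ly have "L ((1 - u) *\<^sub>R x0 + u *\<^sub>R (t *\<^sub>R d')) < ereal c" by (rule le_less_trans)
  then show False using Lgt by simp
qed



lemma ray_asymp_neg:
  fixes U :: "'a::real_normed_vector \<Rightarrow> ereal"
  assumes ray: "\<forall>s>0. U (x0 + s *\<^sub>R d) \<le> ereal (l0 - s * e)" and e: "e > 0"
  shows "asymp_fun U d < 0"
proof -
  let ?F = "nhds d \<times>\<^sub>F (at_top :: real filter)"
  let ?f = "\<lambda>(d', t::real). U (t *\<^sub>R d') / ereal t"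
  have "\<not> ereal (-e/2) < asymp_fun U d"
  proof
    assume "ereal (-e/2) < asymp_fun U d"
    then have "eventually (\<lambda>p. ?f p > ereal (-e/2)) ?F" unfolding asymp_fun_def by (rule less_LiminfD)
    then obtain Pf Pg where Pf: "eventually Pf (nhds d)" and Pg: "eventually Pg at_top"
      and PP: "\<forall>x y. Pf x \<longrightarrow> Pg y \<longrightarrow> ?f (x, y) > ereal (-e/2)"
      unfolding eventually_prod_filter by blast
    obtain r where r: "r > 0" "\<forall>y. dist y d < r \<longrightarrow> Pf y" using Pf unfolding eventually_nhds_metric by blast
    obtain Nt where Nt: "\<forall>t\<ge>Nt. Pg t" using Pg unfolding eventually_at_top_linorder by blast
    define t where "t = \<bar>Nt\<bar> + 1 + norm x0 / r + 2 * \<bar>l0\<bar> / e"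
    have nn: "norm x0 / r \<ge> 0" "2 * \<bar>l0\<bar> / e \<ge> 0" using r e by auto
    have tp: "t > 0" "t \<ge> Nt" "t > norm x0 / r" "t \<ge> 2 * \<bar>l0\<bar> / e" unfolding t_def using nn by linarith+
    define d' where "d' = d + (1/t) *\<^sub>R x0"
    have "norm x0 < t * r" using tp(3) r(1) by (simp add: pos_divide_less_eq)
    then have "norm x0 / t < r" using tp(1) by (simp add: pos_divide_less_eq mult.commute)
    then have dd: "dist d' d < r" unfolding d'_def using tp(1) by (simp add: dist_norm)
    have td: "t *\<^sub>R d' = x0 + t *\<^sub>R d" unfolding d'_def using tp(1) by (simp add: algebra_simps)
    have "U (t *\<^sub>R d') \<le> ereal (l0 - t * e)" using ray tp(1) unfolding td by blast
    then have "U (t *\<^sub>R d') / ereal t \<le> ereal (l0 - t * e) / ereal t"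
      by (rule ereal_divide_right_mono) (use tp in simp)
    also have "\<dots> = ereal ((l0 - t * e) / t)" using tp by simp
    also have "(l0 - t * e) / t \<le> -e/2"
    proof -
      have "2 * \<bar>l0\<bar> \<le> t * e" using tp(4) e by (simp add: pos_divide_le_eq)
      then have "2 * l0 \<le> t * e" by linarith
      then have "2 * (l0 - t * e) \<le> t * (-e)" by (simp add: algebra_simps)
      then show ?thesis using tp(1) by (simp add: pos_divide_le_eq algebra_simps)
    qed
    then have "ereal ((l0 - t * e) / t) \<le> ereal (-e/2)" by simp
    finally have "?f (d', t) \<le> ereal (-e/2)" by simp
    moreover have "?f (d', t) > ereal (-e/2)" using PP r(2) dd Nt tp(2) by blast
    ultimately show False by simp
  qed
  then have "asymp_fun U d \<le> ereal (-e/2)" by simp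
  also have "\<dots> < 0" using e by simp
  finally show ?thesis .
qed

lemma part2:
  fixes L :: "real^'n \<Rightarrow> ereal" and C :: "(real^'n) set"
  assumes prp: "proper_fun L" and lsc: "lsc_fun L" and cv: "convex_fun L" and als: "ALS L"
    and poly: "polyhedron C" and dm: "dom_fun L \<inter> C \<noteq> {}"
  shows "ALS (\<lambda>x. L x + indicator_fun C x)" (is "ALS ?U")
proof -
  obtain x0 where x0C: "x0 \<in> C" and x0d: "L x0 < \<infinity>" using dm unfolding dom_fun_def by blast
  obtain l0 where l0: "L x0 = ereal l0" using x0d prp unfolding proper_fun_def by (cases "L x0") auto
  obtain F where F: "finite F" "C = \<Inter> F" "\<forall>h\<in>F. \<exists>a b. a \<noteq> 0 \<and> h = {x. a \<bullet> x \<le> b}"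
    using poly unfolding polyhedron_def by blast
  have Uc: "?U y = L y" if "y \<in> C" for y using that by (simp add: indicator_fun_def)
  have LU: "L y \<le> ?U y" for y
  proof -
    have "L y + 0 \<le> L y + indicator_fun C y" by (rule add_left_mono) (simp add: indicator_fun_def)
    then show ?thesis by simp
  qed
  show ?thesis
  unfolding ALS_def
  proof (intro allI impI, elim conjE)
    fix \<rho> :: real and \<tau> :: "nat \<Rightarrow> real" and x :: "nat \<Rightarrow> real^'n" and xbar
    assume \<rho>: "\<rho> > 0" and \<tau>b: "bounded (range \<tau>)" and lv: "\<forall>k. x k \<in> lev ?U (\<tau> k)"
      and N: "filterlim (\<lambda>k. norm (x k)) at_top sequentially"
      and lim: "(\<lambda>k. x k /\<^sub>R norm (x k)) \<longlonglongrightarrow> xbar" and ker: "xbar \<in> Ker_asymp ?U"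
    have xC: "x k \<in> C" and xL: "L (x k) \<le> ereal (\<tau> k)" for k
    proof -
      have h: "L (x k) + indicator_fun C (x k) \<le> ereal (\<tau> k)" using lv by (simp add: lev_def)
      have "L (x k) \<noteq> -\<infinity>" using prp unfolding proper_fun_def by blast
      then show "x k \<in> C" using h by (cases "L (x k)") (auto simp: indicator_fun_def split: if_splits)
      then show "L (x k) \<le> ereal (\<tau> k)" using h by (simp add: indicator_fun_def)
    qed
    have Npos: "eventually (\<lambda>k. norm (x k) > 0) sequentially" using filterlim_at_top_dense[THEN iffD1, OF N, rule_format, of 0] by simp
    have rec: "a \<bullet> xbar \<le> 0" if "h \<in> F" "h = {x. a \<bullet> x \<le> \<beta>}" for h a \<beta>
    proof -
      have ax: "a \<bullet> x k \<le> \<beta>" for k using xC[of k] F(2) that by auto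
      have l1: "(\<lambda>k. (a \<bullet> x k) / norm (x k)) \<longlonglongrightarrow> a \<bullet> xbar" by (rule inner_lim[OF lim])
      have l2: "(\<lambda>k. \<beta> / norm (x k)) \<longlonglongrightarrow> 0"
        by (rule tendsto_divide_0[OF tendsto_const filterlim_at_top_imp_at_infinity[OF N]])
      have "eventually (\<lambda>k. (a \<bullet> x k) / norm (x k) \<le> \<beta> / norm (x k)) sequentially"
        using Npos by (rule eventually_mono) (simp add: ax divide_right_mono)
      then show ?thesis using tendsto_le[OF trivial_limit_sequentially l2 l1] by simp
    qed
    have rayC: "x0 + s *\<^sub>R xbar \<in> C" if "s > 0" for s
    proof -
      have "x0 + s *\<^sub>R xbar \<in> h" if hF: "h \<in> F" for h
      proof -
        obtain a \<beta> where h: "h = {x. a \<bullet> x \<le> \<beta>}" using F(3) hF by blast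
        have "a \<bullet> x0 \<le> \<beta>" using x0C F(2) hF h by auto
        moreover have "s * (a \<bullet> xbar) \<le> 0" using rec[OF hF h] \<open>s > 0\<close> by (simp add: mult_nonneg_nonpos)
        ultimately show ?thesis unfolding h by (simp add: inner_add_right)
      qed
      then show ?thesis using F(2) by blast
    qed
    have U0: "asymp_fun ?U xbar = 0" using ker by (simp add: Ker_asymp_def)
    have Lle: "asymp_fun L xbar \<le> 0" using asymp_mono[of L ?U xbar, OF LU] U0 by simp
    have "asymp_fun L xbar = 0"
    proof (rule ccontr)
      assume "asymp_fun L xbar \<noteq> 0"
      then have neg: "asymp_fun L xbar < 0" using Lle by simp
      obtain e where e: "e > 0" "asymp_fun L xbar < ereal (-e)"
      proof (cases "asymp_fun L xbar")
        case (real r)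
        then show ?thesis using that[of "-r/2"] neg by simp
      next
        case PInf then show ?thesis using neg by simp
      next
        case MInf then show ?thesis using that[of 1] by simp
      qed
      have "\<forall>s>0. ?U (x0 + s *\<^sub>R xbar) \<le> ereal (l0 - s * (e/2))"
      proof (intro allI impI)
        fix s :: real assume s: "s > 0"
        have "L (x0 + s *\<^sub>R xbar) \<le> ereal (l0 - s*e/2)"
          by (rule conv_lsc_ray[OF prp lsc cv l0 e(2) e(1) s])
        then show "?U (x0 + s *\<^sub>R xbar) \<le> ereal (l0 - s * (e/2))" using Uc[OF rayC[OF s]] by simp
      qed
      then have "asymp_fun ?U xbar < 0" by (rule ray_asymp_neg) (use e in simp)
      then show False using U0 by simp
    qed
    then have kerL: "xbar \<in> Ker_asymp L" by (simp add: Ker_asymp_def)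
    obtain k0 where k0: "\<forall>k\<ge>k0. x k - \<rho> *\<^sub>R xbar \<in> lev L (\<tau> k)"
      using als[unfolded ALS_def, rule_format, of \<rho> \<tau> x xbar] \<rho> \<tau>b xL N lim kerL by (auto simp: lev_def)
    have evh: "\<forall>h\<in>F. eventually (\<lambda>k. x k - \<rho> *\<^sub>R xbar \<in> h) sequentially"
    proof
      fix h assume hF: "h \<in> F"
      obtain a \<beta> where h: "h = {x. a \<bullet> x \<le> \<beta>}" using F(3) hF by blast
      have ax: "a \<bullet> x k \<le> \<beta>" for k using xC[of k] F(2) hF h by auto
      have v: "a \<bullet> xbar \<le> 0" by (rule rec[OF hF h])
      show "eventually (\<lambda>k. x k - \<rho> *\<^sub>R xbar \<in> h) sequentially"
      proof (cases "a \<bullet> xbar = 0")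
        case True then show ?thesis using ax unfolding h by (simp add: inner_diff_right)
      next
        case False
        then have vn: "a \<bullet> xbar < 0" using v by simp
        have "eventually (\<lambda>k. a \<bullet> x k < \<beta> + \<rho> * (a \<bullet> xbar)) sequentially"
          by (rule ev_lt_bot[OF N inner_lim[OF lim] vn])
        then show ?thesis by (rule eventually_mono) (simp add: h inner_diff_right)
      qed
    qed
    have "eventually (\<lambda>k. \<forall>h\<in>F. x k - \<rho> *\<^sub>R xbar \<in> h) sequentially"
      by (rule eventually_ball_finite[OF F(1) evh])
    then obtain k1 where k1: "\<forall>k\<ge>k1. x k - \<rho> *\<^sub>R xbar \<in> C" using F(2) eventually_sequentially by auto
    show "\<exists>k0. \<forall>k\<ge>k0. x k - \<rho> *\<^sub>R xbar \<in> lev ?U (\<tau> k)"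
    proof (intro exI allI impI)
      fix k assume "max k0 k1 \<le> k"
      then have "L (x k - \<rho> *\<^sub>R xbar) \<le> ereal (\<tau> k)" "x k - \<rho> *\<^sub>R xbar \<in> C"
        using k0 k1 by (auto simp: lev_def)
      then show "x k - \<rho> *\<^sub>R xbar \<in> lev ?U (\<tau> k)" unfolding lev_def by (simp add: indicator_fun_def)
    qed
  qed
qed


theorem mainTheorem1:
  fixes L :: "real^'n \<Rightarrow> ereal"
  assumes "proper_fun L" and "lsc_fun L"
  shows "(\<forall>(B :: real^'n^'r) (b :: real^'r) (lam :: real^'r) (Phi :: real^'r \<Rightarrow> real).
            (\<forall>i. lam $ i > 0) \<and> (Phi = Phi0 lam \<or> Phi = Phiplus lam) \<and> ALS L
            \<longrightarrow> ALS (\<lambda>x. L x + ereal (Phi (B *v x - b))))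
       \<and> (\<forall>C :: (real^'n) set.
            convex_fun L \<and> ALS L \<and> polyhedron C \<and> dom_fun L \<inter> C \<noteq> {}
            \<longrightarrow> ALS (\<lambda>x. L x + indicator_fun C x))"
proof (intro conjI allI impI)
  fix B :: "real^'n^'r" and b lam :: "real^'r" and Phi :: "real^'r \<Rightarrow> real"
  assume h: "(\<forall>i. lam $ i > 0) \<and> (Phi = Phi0 lam \<or> Phi = Phiplus lam) \<and> ALS L"
  show "ALS (\<lambda>x. L x + ereal (Phi (B *v x - b)))"
    using part1[of lam Phi L B b] h by blast
next
  fix C :: "(real^'n) set"
  assume h: "convex_fun L \<and> ALS L \<and> polyhedron C \<and> dom_fun L \<inter> C \<noteq> {}"
  show "ALS (\<lambda>x. L x + indicator_fun C x)"
    using part2[of L C] h assms by blast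
qed

end
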